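(* Let $A,B\in\mathbb{T}^{k\times n}$ be such that $A\odot B^T$ is symmetric. Then any two rows of the $k\times 2n$ matrix $(A|B)$ are (tropically) orthogonal.
   Context: $\mathbb{T}=\mathbb{R}\cup\{\infty\}$ with $a\oplus b=\min(a,b)$, $a\odot b=a+b$. $(A\odot B^T)_{ij}=\min_{l\in[n]}(A_{il}+B_{jl})$. The columns of $(A|B)$ are indexed by $[2n]=\{1,\dots,n,\bar1,\dots,\bar n\}$ (columns of $A$ by $1,\dots,n$, of $B$ by $\bar1,\dots,\bar n$), with $\bar{\bar i}=i$. Two vectors $x,y\in\mathbb{T}^{2n}$ are orthogonal if $\min_{l\in[2n]}(x_l+y_{\bar l})$ is attained at least twice. *)

theory Defs
  imports Complex_Main "HOL-Library.Extended_Real"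
begin

text \<open>Tropical semiring T = R \<union> {\<infinity>} (min-plus) modelled inside ereal: an element is
  "tropical" if it is not -\<infinity>.
  Matrices in T^(k x n) are functions nat \<Rightarrow> nat \<Rightarrow> ereal, only indices i < k, l < n matter.\<close>

definition trop_matrix :: "nat \<Rightarrow> nat \<Rightarrow> (nat \<Rightarrow> nat \<Rightarrow> ereal) \<Rightarrow> bool" where
  "trop_matrix k n A \<longleftrightarrow> (\<forall>i<k. \<forall>l<n. A i l \<noteq> -\<infinity>)"

definition trop_mult_transpose :: "nat \<Rightarrow> (nat \<Rightarrow> nat \<Rightarrow> ereal) \<Rightarrow> (nat \<Rightarrow> nat \<Rightarrow> ereal) \<Rightarrow> nat \<Rightarrow> nat \<Rightarrow> ereal" where
  "trop_mult_transpose n A B i j = Min {A i l + B j l | l. l < n}"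

definition trop_symmetric :: "nat \<Rightarrow> (nat \<Rightarrow> nat \<Rightarrow> ereal) \<Rightarrow> bool" where
  "trop_symmetric k M \<longleftrightarrow> (\<forall>i<k. \<forall>j<k. M i j = M j i)"

definition concat_row :: "nat \<Rightarrow> (nat \<Rightarrow> nat \<Rightarrow> ereal) \<Rightarrow> (nat \<Rightarrow> nat \<Rightarrow> ereal) \<Rightarrow> nat \<Rightarrow> nat \<Rightarrow> ereal" where
  "concat_row n A B i l = (if l < n then A i l else B i (l - n))"

definition bar :: "nat \<Rightarrow> nat \<Rightarrow> nat" where
  "bar n l = (if l < n then l + n else l - n)"

definition trop_orthogonal :: "nat \<Rightarrow> (nat \<Rightarrow> ereal) \<Rightarrow> (nat \<Rightarrow> ereal) \<Rightarrow> bool" where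
  "trop_orthogonal n x y \<longleftrightarrow>
     (let m = Min {x l + y (bar n l) | l. l < 2 * n} in
      \<exists>l1 l2. l1 < 2 * n \<and> l2 < 2 * n \<and> l1 \<noteq> l2 \<and>
              x l1 + y (bar n l1) = m \<and> x l2 + y (bar n l2) = m)"

end

theory Submission
  imports Defs
begin

theorem proposition4p15:
  fixes k n :: nat and A B :: "nat \<Rightarrow> nat \<Rightarrow> ereal"
  assumes "n \<ge> 1"
    and "trop_matrix k n A" and "trop_matrix k n B"
    and "trop_symmetric k (trop_mult_transpose n A B)"
    and "i < k" and "j < k" and "i \<noteq> j"
  shows "trop_orthogonal n (concat_row n A B i) (concat_row n A B j)"
proof -
  define x where "x = concat_row n A B i"
  define y where "y = concat_row n A B j"
  define S1 where "S1 = {A i l + B j l | l. l < n}"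
  define S2 where "S2 = {A j l + B i l | l. l < n}"
  have f1: "finite S1" "S1 \<noteq> {}" unfolding S1_def using assms(1) by (auto intro: exI[of _ 0])
  have f2: "finite S2" "S2 \<noteq> {}" unfolding S2_def using assms(1) by (auto intro: exI[of _ 0])
  have eq: "Min S1 = Min S2"
    using assms(4-6) unfolding trop_symmetric_def trop_mult_transpose_def S1_def S2_def by auto
  obtain l1 where l1: "l1 < n" "A i l1 + B j l1 = Min S1"
    using Min_in[OF f1] unfolding S1_def by auto
  obtain l2 where l2: "l2 < n" "A j l2 + B i l2 = Min S2"
    using Min_in[OF f2] unfolding S2_def by auto
  have S: "{x l + y (bar n l) | l. l < 2 * n} = S1 \<union> S2"
  proof (rule set_eqI, rule iffI)
    fix v assume "v \<in> {x l + y (bar n l) | l. l < 2 * n}"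
    then obtain l where l: "l < 2*n" "v = x l + y (bar n l)" by auto
    show "v \<in> S1 \<union> S2"
    proof (cases "l < n")
      case True then show ?thesis using l unfolding S1_def x_def y_def concat_row_def bar_def by auto
    next
      case False
      then have "v = A j (l-n) + B i (l-n)" "l - n < n"
        using l unfolding x_def y_def concat_row_def bar_def by (auto simp: add.commute)
      then show ?thesis unfolding S2_def by blast
    qed
  next
    fix v assume "v \<in> S1 \<union> S2"
    then show "v \<in> {x l + y (bar n l) | l. l < 2 * n}"
    proof
      assume "v \<in> S1"
      then obtain l where "l < n" "v = A i l + B j l" unfolding S1_def by auto
      then have "l < 2*n" "v = x l + y (bar n l)" unfolding x_def y_def concat_row_def bar_def by auto
      then show ?thesis by blast
    next
      assume "v \<in> S2"
      then obtain l where "l < n" "v = A j l + B i l" unfolding S2_def by auto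
      then have "n + l < 2*n" "v = x (n+l) + y (bar n (n+l))" unfolding x_def y_def concat_row_def bar_def
        by (auto simp: add.commute)
      then show ?thesis by blast
    qed
  qed
  have m: "Min (S1 \<union> S2) = Min S1"
    using Min_Un[OF f1 f2] eq by simp
  have a1: "x l1 + y (bar n l1) = Min S1" using l1 unfolding x_def y_def concat_row_def bar_def by auto
  have a2: "x (n+l2) + y (bar n (n+l2)) = Min S1" using l2 eq unfolding x_def y_def concat_row_def bar_def
    by (auto simp: add.commute)
  show ?thesis unfolding trop_orthogonal_def Let_def S m x_def[symmetric] y_def[symmetric]
    using a1 a2 l1(1) l2(1) by (intro exI[of _ l1] exI[of _ "n+l2"]) auto
qed

end
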